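(* Let $t$ be a positive integer and $i\in\{1,\ldots,t\}$. Then there exist a positive integer $k$ and matrices $A,M,N,B\in\mathbb{Z}^{k\times k}_{\rm uptr}$ such that \[AM^{a_1}NM^{a_2}N\cdots NM^{a_t}B=a_iE_k\] for all nonnegative integers $a_1,\ldots,a_t$ (the product contains $t-1$ factors $N$).
   Context: $\mathbb{Z}^{k\times k}_{\rm uptr}$ is the set of upper-triangular $k\times k$ integer matrices. $E_k$ denotes the $k\times k$ matrix whose only nonzero entry is the entry in row $1$, column $k$, equal to $1$. *)

theory Defs
  imports "Jordan_Normal_Form.Matrix"
begin

definition E_mat :: "nat \<Rightarrow> int mat" where
  "E_mat k = mat k k (\<lambda>(r, c). if r = 0 \<and> c = k - 1 then 1 else 0)"

fun word_MN :: "int mat \<Rightarrow> int mat \<Rightarrow> nat list \<Rightarrow> int mat" where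
  "word_MN M N [] = 1\<^sub>m (dim_row M)"
| "word_MN M N [a] = M ^\<^sub>m a"
| "word_MN M N (a # as) = M ^\<^sub>m a * N * word_MN M N as"

end

theory Submission
  imports Defs
begin

lemma mult_row_support:
  assumes X: "X \<in> carrier_mat n m" and Y: "Y \<in> carrier_mat m p" and r: "r < n" and c: "c < p"
    and S: "S \<subseteq> {..<m}" and z: "\<forall>d<m. d \<notin> S \<longrightarrow> X $$ (r,d) = 0"
  shows "(X * Y) $$ (r,c) = (\<Sum>d\<in>S. X $$ (r,d) * Y $$ (d,c))"
proof -
  have "(X * Y) $$ (r,c) = (\<Sum>d\<in>{0..<m}. X $$ (r,d) * Y $$ (d,c))"
    using X Y r c by (simp add: scalar_prod_def)
  also have "\<dots> = (\<Sum>d\<in>S. X $$ (r,d) * Y $$ (d,c))"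
    by (rule sum.mono_neutral_left[symmetric]) (use S z in auto)
  finally show ?thesis .
qed

lemma mult_col_support:
  assumes X: "X \<in> carrier_mat n m" and Y: "Y \<in> carrier_mat m p" and r: "r < n" and c: "c < p"
    and S: "S \<subseteq> {..<m}" and z: "\<forall>d<m. d \<notin> S \<longrightarrow> Y $$ (d,c) = 0"
  shows "(X * Y) $$ (r,c) = (\<Sum>d\<in>S. X $$ (r,d) * Y $$ (d,c))"
proof -
  have "(X * Y) $$ (r,c) = (\<Sum>d\<in>{0..<m}. X $$ (r,d) * Y $$ (d,c))"
    using X Y r c by (simp add: scalar_prod_def)
  also have "\<dots> = (\<Sum>d\<in>S. X $$ (r,d) * Y $$ (d,c))"
    by (rule sum.mono_neutral_left[symmetric]) (use S z in auto)
  finally show ?thesis .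
qed

definition Mm :: "nat \<Rightarrow> nat \<Rightarrow> int mat" where
  "Mm j k = mat k k (\<lambda>(r,c). if r = c then 1 else if r = j \<and> c = Suc j then 1 else 0)"
definition Mpow :: "nat \<Rightarrow> nat \<Rightarrow> nat \<Rightarrow> int mat" where
  "Mpow j k a = mat k k (\<lambda>(r,c). if r = c then 1 else if r = j \<and> c = Suc j then int a else 0)"
definition Nm :: "nat \<Rightarrow> nat \<Rightarrow> int mat" where
  "Nm j k = mat k k (\<lambda>(r,c). if c = Suc r \<and> r \<noteq> j then 1 else 0)"
definition MNm :: "nat \<Rightarrow> nat \<Rightarrow> nat \<Rightarrow> int mat" where
  "MNm j k a = mat k k (\<lambda>(r,c). if c = Suc r \<and> r \<noteq> j then 1
      else if r = j \<and> c = Suc (Suc j) then int a else 0)"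

lemma Mm_pow:
  assumes jk: "Suc j < k"
  shows "Mm j k ^\<^sub>m a = Mpow j k a"
proof (induction a)
  case 0
  show ?case by (rule eq_matI) (auto simp: Mm_def Mpow_def)
next
  case (Suc a)
  have "Mm j k ^\<^sub>m Suc a = Mpow j k a * Mm j k" using Suc by simp
  also have "\<dots> = Mpow j k (Suc a)"
  proof (rule eq_matI)
    fix r c assume r: "r < dim_row (Mpow j k (Suc a))" and c: "c < dim_col (Mpow j k (Suc a))"
    hence rk: "r < k" and ck: "c < k" by (auto simp: Mpow_def)
    have jk': "j < k" using jk by simp
    show "(Mpow j k a * Mm j k) $$ (r, c) = Mpow j k (Suc a) $$ (r, c)"
    proof (cases "r = j")
      case True
      have "(Mpow j k a * Mm j k) $$ (r, c) =
          (\<Sum>d\<in>{j, Suc j}. Mpow j k a $$ (r,d) * Mm j k $$ (d,c))"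
        by (rule mult_row_support[of _ k k _ k]) (use jk rk ck True in \<open>auto simp: Mpow_def Mm_def\<close>)
      also have "\<dots> = Mpow j k a $$ (j,j) * Mm j k $$ (j,c) + Mpow j k a $$ (j,Suc j) * Mm j k $$ (Suc j,c)"
        using True by simp
      also have "\<dots> = (if j = c then 1 else if c = Suc j then 1 else 0) + int a * (if Suc j = c then 1 else 0)"
        using jk jk' ck by (simp add: Mpow_def Mm_def)
      also have "\<dots> = Mpow j k (Suc a) $$ (r, c)"
        using jk rk ck True by (simp add: Mpow_def)
      finally show ?thesis .
    next
      case False
      have "(Mpow j k a * Mm j k) $$ (r, c) =
          (\<Sum>d\<in>{r}. Mpow j k a $$ (r,d) * Mm j k $$ (d,c))"
        by (rule mult_row_support[of _ k k _ k]) (use jk rk ck False in \<open>auto simp: Mpow_def Mm_def\<close>)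
      also have "\<dots> = Mpow j k (Suc a) $$ (r, c)"
        using jk rk ck False by (simp add: Mpow_def Mm_def)
      finally show ?thesis .
    qed
  qed (auto simp: Mpow_def Mm_def)
  finally show ?case .
qed

lemma MN_prod:
  assumes jk: "Suc j < k"
  shows "Mpow j k a * Nm j k = MNm j k a"
proof (rule eq_matI)
  fix r c assume r: "r < dim_row (MNm j k a)" and c: "c < dim_col (MNm j k a)"
  hence rk: "r < k" and ck: "c < k" by (auto simp: MNm_def)
  have jk': "j < k" using jk by simp
  show "(Mpow j k a * Nm j k) $$ (r, c) = MNm j k a $$ (r, c)"
  proof (cases "r = j")
    case True
    have "(Mpow j k a * Nm j k) $$ (r, c) =
        (\<Sum>d\<in>{j, Suc j}. Mpow j k a $$ (r,d) * Nm j k $$ (d,c))"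
      by (rule mult_row_support[of _ k k _ k]) (use jk rk ck True in \<open>auto simp: Mpow_def Nm_def\<close>)
    also have "\<dots> = Mpow j k a $$ (j,j) * Nm j k $$ (j,c) + Mpow j k a $$ (j,Suc j) * Nm j k $$ (Suc j,c)"
      using True by simp
    also have "\<dots> = int a * (if c = Suc (Suc j) then 1 else 0)"
      using jk jk' ck by (simp add: Mpow_def Nm_def)
    also have "\<dots> = MNm j k a $$ (r, c)"
      using jk rk ck True by (simp add: MNm_def)
    finally show ?thesis .
  next
    case False
    have "(Mpow j k a * Nm j k) $$ (r, c) =
        (\<Sum>d\<in>{r}. Mpow j k a $$ (r,d) * Nm j k $$ (d,c))"
      by (rule mult_row_support[of _ k k _ k]) (use jk rk ck False in \<open>auto simp: Mpow_def Nm_def\<close>)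
    also have "\<dots> = MNm j k a $$ (r, c)"
      using jk rk ck False by (simp add: Mpow_def Nm_def MNm_def)
    finally show ?thesis .
  qed
qed (auto simp: Mpow_def Nm_def MNm_def)

lemma word_carrier:
  assumes "M \<in> carrier_mat k k" "N \<in> carrier_mat k k"
  shows "as \<noteq> [] \<Longrightarrow> word_MN M N as \<in> carrier_mat k k"
  using assms by (induction M N as rule: word_MN.induct) auto

lemma word_inv:
  assumes pt: "p < t" and k: "k = Suc t"
  shows "as \<noteq> [] \<Longrightarrow> length as \<le> t \<Longrightarrow>
    (p \<le> t - length as \<longrightarrow> word_MN (Mm p k) (Nm p k) as $$ (Suc (t - length as), t) = 1) \<and>
    (t - length as \<le> p \<longrightarrow> word_MN (Mm p k) (Nm p k) as $$ (t - length as, t) = int (as ! (p - (t - length as))))"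
proof (induction as)
  case Nil
  then show ?case by simp
next
  case (Cons a as)
  have jk: "Suc p < k" using pt k by simp
  have Mc: "Mm p k \<in> carrier_mat k k" and Nc: "Nm p k \<in> carrier_mat k k"
    by (auto simp: Mm_def Nm_def)
  show ?case
  proof (cases "as = []")
    case True
    have W: "word_MN (Mm p k) (Nm p k) (a # as) = Mpow p k a"
      using True Mm_pow[OF jk] by simp
    have "t - length (a # as) = t - 1" using True by simp
    then show ?thesis using W True pt k by (auto simp: Mpow_def)
  next
    case False
    then obtain b rest where as: "as = b # rest" by (cases as) auto
    have W: "word_MN (Mm p k) (Nm p k) (a # as) = MNm p k a * word_MN (Mm p k) (Nm p k) as"
      using as Mm_pow[OF jk] MN_prod[OF jk] by simp
    define W' where "W' = word_MN (Mm p k) (Nm p k) as"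
    have W'c: "W' \<in> carrier_mat k k" unfolding W'_def using word_carrier[OF Mc Nc] False by blast
    have MNc: "MNm p k a \<in> carrier_mat k k" by (simp add: MNm_def)
    define q where "q = t - length (a # as)"
    have q': "t - length as = Suc q" using Cons.prems unfolding q_def by simp
    have qt: "Suc (Suc q) \<le> t" using Cons.prems False unfolding q_def by (cases as) auto
    have IH: "(p \<le> Suc q \<longrightarrow> W' $$ (Suc (Suc q), t) = 1) \<and>
       (Suc q \<le> p \<longrightarrow> W' $$ (Suc q, t) = int (as ! (p - Suc q)))"
      using Cons.IH[OF False] Cons.prems q' unfolding W'_def by simp
    have "p \<le> q \<longrightarrow> (MNm p k a * W') $$ (Suc q, t) = 1"
    proof
      assume pq: "p \<le> q"
      have "(MNm p k a * W') $$ (Suc q, t) = (\<Sum>d\<in>{Suc (Suc q)}. MNm p k a $$ (Suc q, d) * W' $$ (d, t))"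
        by (rule mult_row_support[OF MNc W'c]) (use pq qt k in \<open>auto simp: MNm_def\<close>)
      also have "\<dots> = W' $$ (Suc (Suc q), t)" using pq qt k by (simp add: MNm_def)
      finally show "(MNm p k a * W') $$ (Suc q, t) = 1" using IH pq by simp
    qed
    moreover have "q \<le> p \<longrightarrow> (MNm p k a * W') $$ (q, t) = int ((a # as) ! (p - q))"
    proof
      assume qp: "q \<le> p"
      show "(MNm p k a * W') $$ (q, t) = int ((a # as) ! (p - q))"
      proof (cases "q = p")
        case True
        have "(MNm p k a * W') $$ (q, t) = (\<Sum>d\<in>{Suc (Suc q)}. MNm p k a $$ (q, d) * W' $$ (d, t))"
          by (rule mult_row_support[OF MNc W'c]) (use True qt k in \<open>auto simp: MNm_def\<close>)
        also have "\<dots> = int a * W' $$ (Suc (Suc q), t)" using True qt k by (simp add: MNm_def)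
        finally show ?thesis using IH True by simp
      next
        case False
        have "(MNm p k a * W') $$ (q, t) = (\<Sum>d\<in>{Suc q}. MNm p k a $$ (q, d) * W' $$ (d, t))"
          by (rule mult_row_support[OF MNc W'c]) (use False qt k in \<open>auto simp: MNm_def\<close>)
        also have "\<dots> = W' $$ (Suc q, t)" using False qt k by (simp add: MNm_def)
        also have "\<dots> = int (as ! (p - Suc q))" using IH False qp by simp
        also have "\<dots> = int ((a # as) ! (p - q))" using False qp
          by (simp add: Suc_diff_Suc[symmetric]) 
        finally show ?thesis .
      qed
    qed
    ultimately show ?thesis using W unfolding W'_def[symmetric] q_def[symmetric] by simp
  qed
qed

theorem lemma4p1:
  fixes t i :: nat
  assumes "t \<ge> 1" and "1 \<le> i" and "i \<le> t"
  shows "\<exists>k \<ge> 1. \<exists>A M N B :: int mat.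
           A \<in> carrier_mat k k \<and> M \<in> carrier_mat k k \<and> N \<in> carrier_mat k k \<and> B \<in> carrier_mat k k \<and>
           upper_triangular A \<and> upper_triangular M \<and> upper_triangular N \<and> upper_triangular B \<and>
           (\<forall>as :: nat list. length as = t \<longrightarrow>
              A * word_MN M N as * B = of_nat (as ! (i - 1)) \<cdot>\<^sub>m E_mat k)"
proof -
  define k where "k = Suc t"
  define p where "p = i - 1"
  have pt: "p < t" using assms unfolding p_def by simp
  define A :: "int mat" where "A = mat k k (\<lambda>(r,c). if r = 0 \<and> c = 0 then 1 else 0)"
  define B :: "int mat" where "B = mat k k (\<lambda>(r,c). if r = t \<and> c = t then 1 else 0)"
  have Ac: "A \<in> carrier_mat k k" and Bc: "B \<in> carrier_mat k k" by (auto simp: A_def B_def)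
  have Mc: "Mm p k \<in> carrier_mat k k" and Nc: "Nm p k \<in> carrier_mat k k"
    by (auto simp: Mm_def Nm_def)
  have ut: "upper_triangular A" "upper_triangular (Mm p k)" "upper_triangular (Nm p k)" "upper_triangular B"
    by (auto simp: upper_triangular_def A_def B_def Mm_def Nm_def)
  have main: "A * word_MN (Mm p k) (Nm p k) as * B = of_nat (as ! (i - 1)) \<cdot>\<^sub>m E_mat k"
    if len: "length as = t" for as
  proof -
    define W where "W = word_MN (Mm p k) (Nm p k) as"
    have ne: "as \<noteq> []" using len assms by auto
    have Wc: "W \<in> carrier_mat k k" unfolding W_def using word_carrier[OF Mc Nc ne] .
    have W0: "W $$ (0, t) = int (as ! p)"
      using word_inv[OF pt k_def ne] len unfolding W_def by simp
    have AWB: "A * W * B = A * (W * B)" using Ac Wc Bc by (simp add: assoc_mult_mat)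
    show ?thesis unfolding W_def[symmetric] AWB
    proof (rule eq_matI)
      fix r c assume r: "r < dim_row (of_nat (as ! (i - 1)) \<cdot>\<^sub>m E_mat k)"
        and c: "c < dim_col (of_nat (as ! (i - 1)) \<cdot>\<^sub>m E_mat k)"
      hence rk: "r < k" and ck: "c < k" by (auto simp: E_mat_def)
      have WBc: "W * B \<in> carrier_mat k k" using Wc Bc by simp
      have WB: "(W * B) $$ (0, c) = (if c = t then W $$ (0, t) else 0)"
      proof (cases "c = t")
        case True
        have "(W * B) $$ (0, c) = (\<Sum>d\<in>{t}. W $$ (0, d) * B $$ (d, c))"
          by (rule mult_col_support[OF Wc Bc]) (use True ck k_def in \<open>auto simp: B_def\<close>)
        then show ?thesis using True k_def by (simp add: B_def)
      next
        case False
        have "(W * B) $$ (0, c) = (\<Sum>d\<in>{}. W $$ (0, d) * B $$ (d, c))"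
          by (rule mult_col_support[OF Wc Bc]) (use False ck k_def in \<open>auto simp: B_def\<close>)
        then show ?thesis using False by simp
      qed
      have "(A * (W * B)) $$ (r, c) = (\<Sum>d\<in>(if r = 0 then {0} else {}). A $$ (r, d) * (W * B) $$ (d, c))"
        by (rule mult_row_support[OF Ac WBc]) (use rk ck k_def in \<open>auto simp: A_def\<close>)
      also have "\<dots> = (if r = 0 then (W * B) $$ (0, c) else 0)"
        using rk k_def by (simp add: A_def)
      also have "\<dots> = (of_nat (as ! (i - 1)) \<cdot>\<^sub>m E_mat k) $$ (r, c)"
        using WB W0 rk ck k_def p_def by (simp add: E_mat_def)
      finally show "(A * (W * B)) $$ (r, c) = (of_nat (as ! (i - 1)) \<cdot>\<^sub>m E_mat k) $$ (r, c)" .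
    qed (use Ac Bc in \<open>auto simp: E_mat_def\<close>)
  qed
  show ?thesis
    apply (rule exI[of _ k], rule conjI, simp add: k_def)
    apply (rule exI[of _ A], rule exI[of _ "Mm p k"], rule exI[of _ "Nm p k"], rule exI[of _ B])
    using Ac Bc Mc Nc ut main by blast
qed

end
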